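(* Let $(X,\mathscr B,\mu,T)$ be a measure-preserving system and fix the system of coefficients $c_S^n=2^{-n}$. Then $\sup_\alpha\operatorname{Int}_\mu(X,\alpha,T)=h_\mu(X,T)$, the supremum being over finite measurable partitions $\alpha$ of $X$.
   Context: A measure-preserving system is a complete probability space $(X,\mathscr B,\mu)$ with a bijection $T$, $T$ and $T^{-1}$ measurable and $\mu$-preserving. Notation: $n^*=\{0,\dots,n-1\}$, $S^c=n^*\setminus S$, $\alpha_S=\bigvee_{i\in S}T^{-i}\alpha$, $H_\mu$ the Shannon entropy of a partition. The measure-theoretic intricacy is $\operatorname{Int}_\mu(X,\alpha,T)=\lim_{n\to\infty}\frac1n\sum_{S\subset n^*}c_S^n\big[H_\mu(\alpha_S)+H_\mu(\alpha_{S^c})-H_\mu(\alpha_{n^*})\big]$ (the limit exists). $h_\mu(X,T)$ is the usual measure-theoretic entropy. *)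

theory Defs
  imports "HOL-Analysis.Analysis" "HOL-Probability.Probability"
begin

definition mps :: "'a measure \<Rightarrow> ('a \<Rightarrow> 'a) \<Rightarrow> bool" where
  "mps M T \<longleftrightarrow> prob_space M \<and> complete_measure M
     \<and> bij_betw T (space M) (space M)
     \<and> T \<in> M \<rightarrow>\<^sub>M M \<and> inv_into (space M) T \<in> M \<rightarrow>\<^sub>M M
     \<and> distr M M T = M \<and> distr M M (inv_into (space M) T) = M"

definition fin_meas_partition :: "'a measure \<Rightarrow> 'a set set \<Rightarrow> bool" where
  "fin_meas_partition M \<alpha> \<longleftrightarrow> finite \<alpha> \<and> \<alpha> \<subseteq> sets M \<and> disjoint \<alpha> \<and> \<Union>\<alpha> = space M"

text \<open>Shannon entropy of a partition (natural logarithm, 0 log 0 = 0).\<close>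
definition part_entropy :: "'a measure \<Rightarrow> 'a set set \<Rightarrow> real" where
  "part_entropy M P = - (\<Sum>A\<in>P. measure M A * ln (measure M A))"

text \<open>The join alpha_S of the partitions T^{-i} alpha, i in S (trivial partition if S is empty).\<close>
definition join_part :: "'a measure \<Rightarrow> ('a \<Rightarrow> 'a) \<Rightarrow> 'a set set \<Rightarrow> nat set \<Rightarrow> 'a set set" where
  "join_part M T \<alpha> S = {space M \<inter> (\<Inter>i\<in>S. (T ^^ i) -` (f i)) | f. f \<in> S \<rightarrow>\<^sub>E \<alpha>}"

text \<open>Measure-theoretic intricacy with respect to a system of coefficients c n S = c_S^n.\<close>
definition intricacy :: "'a measure \<Rightarrow> ('a \<Rightarrow> 'a) \<Rightarrow> (nat \<Rightarrow> nat set \<Rightarrow> real) \<Rightarrow> 'a set set \<Rightarrow> real" where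
  "intricacy M T c \<alpha> = lim (\<lambda>n. (1 / real n) * (\<Sum>S\<in>Pow {0..<n}. c n S *
      (part_entropy M (join_part M T \<alpha> S) + part_entropy M (join_part M T \<alpha> ({0..<n} - S))
       - part_entropy M (join_part M T \<alpha> {0..<n}))))"

definition part_dyn_entropy :: "'a measure \<Rightarrow> ('a \<Rightarrow> 'a) \<Rightarrow> 'a set set \<Rightarrow> real" where
  "part_dyn_entropy M T \<alpha> = lim (\<lambda>n. part_entropy M (join_part M T \<alpha> {0..<n}) / real n)"

definition ks_entropy :: "'a measure \<Rightarrow> ('a \<Rightarrow> 'a) \<Rightarrow> ereal" where
  "ks_entropy M T = (SUP \<alpha>\<in>{\<alpha>. fin_meas_partition M \<alpha>}. ereal (part_dyn_entropy M T \<alpha>))"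

end

theory Submission
  imports Defs
begin


lemma fekete_mult:
  fixes u :: "nat \<Rightarrow> real"
  assumes sub: "\<And>m n. u (m+n) \<le> u m + u n" and "u 0 \<ge> 0"
  shows "u (q*m + r) \<le> real q * u m + u r"
proof (induction q)
  case 0 then show ?case by simp
next
  case (Suc q)
  have "u (Suc q * m + r) = u (m + (q*m + r))" by (simp add: algebra_simps)
  also have "\<dots> \<le> u m + u (q*m+r)" by (rule sub)
  finally show ?case using Suc by (simp add: algebra_simps)
qed

lemma fekete:
  fixes u :: "nat \<Rightarrow> real"
  assumes nn: "\<And>n. u n \<ge> 0" and sub: "\<And>m n. u (m+n) \<le> u m + u n"
  shows "(\<lambda>n. u n / real n) \<longlonglongrightarrow> (INF n\<in>{1..}. u n / real n)"
proof (rule LIMSEQ_I)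
  define L where "L = (INF n\<in>{1..}. u n / real n)"
  have bdd: "bdd_below ((\<lambda>n. u n / real n) ` {1..})"
    by (rule bdd_belowI[of _ 0]) (auto intro: divide_nonneg_nonneg nn)
  have Lle: "L \<le> u n / real n" if "n \<ge> 1" for n
    unfolding L_def by (rule cINF_lower[OF bdd]) (use that in auto)
  fix e :: real assume e: "0 < e"
  have "L < L + e/2" using e by simp
  then obtain m where m: "m \<ge> 1" "u m / real m < L + e/2"
    unfolding L_def by (subst (asm) cINF_less_iff[OF _ bdd]) auto
  define C where "C = (\<Sum>r<m. u r)"
  have C0: "C \<ge> 0" unfolding C_def by (intro sum_nonneg nn)
  obtain N where N: "N \<ge> 1" "C / real N < e/2"
  proof -
    obtain N0 :: nat where "C / (e/2) < real N0" using reals_Archimedean2 by blast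
    then have "C / real (Suc N0) < e/2" using e C0
      by (simp add: divide_less_eq field_simps)
    then show ?thesis using that[of "Suc N0"] by simp
  qed
  show "\<exists>no. \<forall>n\<ge>no. norm (u n / real n - L) < e"
  proof (intro exI allI impI)
    fix n assume n: "n \<ge> N"
    then have n1: "n \<ge> 1" using N by simp
    define q where "q = n div m"
    define r where "r = n mod m"
    have nqr: "n = q*m + r" unfolding q_def r_def by simp
    have rm: "r < m" unfolding r_def using m by simp
    have "u n \<le> real q * u m + u r" using fekete_mult[OF sub nn] nqr by simp
    also have "u r \<le> C" unfolding C_def using rm
      by (intro member_le_sum) (auto intro: nn)
    finally have un: "u n \<le> real q * u m + C" by simp
    have qm: "real q * real m \<le> real n" using nqr by (metis le_add1 of_nat_le_iff of_nat_mult)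
    have "real q * u m = (real q * real m) * (u m / real m)" using m by simp
    also have "\<dots> \<le> real n * (u m / real m)"
      by (intro mult_right_mono qm divide_nonneg_nonneg nn) simp
    finally have "u n \<le> real n * (u m / real m) + C" using un by simp
    then have "u n / real n \<le> (real n * (u m / real m) + C) / real n" using n1
      by (intro divide_right_mono) auto
    also have "\<dots> = u m / real m + C / real n" using n1 by (simp add: field_simps)
    finally have "u n / real n \<le> u m / real m + C / real n" .
    also have "C / real n \<le> C / real N" using n N C0
      by (intro divide_left_mono) auto
    finally have "u n / real n < L + e" using m(2) N(2) by linarith
    moreover have "L \<le> u n / real n" using Lle n1 by simp
    ultimately show "norm (u n / real n - L) < e" by simp
  qed
qed


definition lev :: "'a measure \<Rightarrow> ('a \<Rightarrow> 'b) \<Rightarrow> 'b \<Rightarrow> 'a set" where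
  "lev M X v = X -` {v} \<inter> space M"
definition pr :: "'a measure \<Rightarrow> ('a \<Rightarrow> 'b) \<Rightarrow> 'b \<Rightarrow> real" where
  "pr M X v = measure M (lev M X v)"
definition Hf :: "'a measure \<Rightarrow> ('a \<Rightarrow> 'b) \<Rightarrow> real" where
  "Hf M X = - (\<Sum>v\<in>X ` space M. pr M X v * ln (pr M X v))"
definition fsimple :: "'a measure \<Rightarrow> ('a \<Rightarrow> 'b) \<Rightarrow> bool" where
  "fsimple M X \<longleftrightarrow> finite (X ` space M) \<and> (\<forall>v. lev M X v \<in> sets M)"

lemma pointwise_gibbs:
  fixes q a b :: real
  assumes "0 \<le> q" "q \<le> a" "q \<le> b"
  shows "q - a*b \<le> q * (ln q - ln a - ln b)"
proof (cases "q = 0")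
  case True then show ?thesis using assms by simp
next
  case False
  then have q: "q > 0" using assms by simp
  then have ab: "a > 0" "b > 0" using assms by auto
  have "ln (a*b/q) \<le> a*b/q - 1" using q ab by (intro ln_le_minus_one) simp
  then have "q * ln (a*b/q) \<le> q * (a*b/q - 1)" using q by (intro mult_left_mono) auto
  also have "\<dots> = a*b - q" using q by (simp add: field_simps)
  finally have "q * ln (a*b/q) \<le> a*b - q" .
  moreover have "ln (a*b/q) = ln a + ln b - ln q" using q ab by (simp add: ln_div ln_mult)
  ultimately show ?thesis by (simp add: algebra_simps)
qed

context prob_space begin

lemma lev_disj: "v \<noteq> w \<Longrightarrow> lev M X v \<inter> lev M X w = {}"
  unfolding lev_def by auto

lemma sum_pr:
  assumes "fsimple M X"
  shows "(\<Sum>v\<in>X ` space M. pr M X v) = 1"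
proof -
  have "(\<Union>v\<in>X ` space M. lev M X v) = space M" unfolding lev_def by auto
  then have "measure M (\<Union>v\<in>X ` space M. lev M X v) = 1" by (simp add: prob_space)
  moreover have "measure M (\<Union>v\<in>X ` space M. lev M X v) = (\<Sum>v\<in>X ` space M. pr M X v)"
    unfolding pr_def using assms unfolding fsimple_def
    by (intro measure_finite_Union) (auto simp: disjoint_family_on_def lev_disj)
  ultimately show ?thesis by simp
qed

lemma pr_le1: "pr M X v \<le> 1" unfolding pr_def by simp

lemma Hf_nonneg: "0 \<le> Hf M X"
proof -
  have "pr M X v * ln (pr M X v) \<le> 0" for v
  proof (cases "pr M X v = 0")
    case False
    then have "pr M X v > 0" unfolding pr_def using measure_nonneg[of M] by (metis order_le_less)
    then have "ln (pr M X v) \<le> 0" using pr_le1 by simp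
    then show ?thesis using \<open>pr M X v > 0\<close> by (simp add: mult_nonneg_nonpos)
  qed simp
  then show ?thesis unfolding Hf_def by (simp add: sum_nonpos)
qed

lemma push:
  assumes X: "fsimple M X" and Y: "fsimple M Y" and g: "\<And>x. x \<in> space M \<Longrightarrow> X x = g (Y x)"
  shows "(\<Sum>v\<in>X ` space M. f v * pr M X v) = (\<Sum>w\<in>Y ` space M. f (g w) * pr M Y w)"
proof -
  have fY: "finite (Y ` space M)" and fX: "finite (X ` space M)" using X Y unfolding fsimple_def by auto
  have sub: "g ` (Y ` space M) \<subseteq> X ` space M" using g by auto
  have levX: "lev M X v = (\<Union>w\<in>{w\<in>Y ` space M. g w = v}. lev M Y w)" for v
    unfolding lev_def using g by auto
  have prX: "pr M X v = (\<Sum>w\<in>{w\<in>Y ` space M. g w = v}. pr M Y w)" for v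
    unfolding pr_def levX using Y fY unfolding fsimple_def
    by (intro measure_finite_Union) (auto simp: disjoint_family_on_def lev_disj)
  have "(\<Sum>w\<in>Y ` space M. f (g w) * pr M Y w)
      = (\<Sum>v\<in>X ` space M. \<Sum>w\<in>{w\<in>Y ` space M. g w = v}. f (g w) * pr M Y w)"
    by (rule sum.group[symmetric, OF fY fX sub])
  also have "\<dots> = (\<Sum>v\<in>X ` space M. f v * pr M X v)"
    unfolding prX sum_distrib_left by (intro sum.cong refl) auto
  finally show ?thesis by simp
qed

lemma Hf_push:
  assumes X: "fsimple M X" and Y: "fsimple M Y" and g: "\<And>x. x \<in> space M \<Longrightarrow> X x = g (Y x)"
  shows "Hf M X = - (\<Sum>w\<in>Y ` space M. pr M Y w * ln (pr M X (g w)))"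
  unfolding Hf_def using push[OF X Y g, of "\<lambda>v. ln (pr M X v)"] by (simp add: mult.commute)

lemma pr_mono:
  assumes X: "fsimple M X" and g: "\<And>x. x \<in> space M \<Longrightarrow> X x = g (Y x)"
  shows "pr M Y w \<le> pr M X (g w)"
  unfolding pr_def using X g unfolding fsimple_def
  by (intro finite_measure_mono) (auto simp: lev_def)

lemma Hf_mono:
  assumes X: "fsimple M X" and Y: "fsimple M Y" and g: "\<And>x. x \<in> space M \<Longrightarrow> X x = g (Y x)"
  shows "Hf M X \<le> Hf M Y"
proof -
  have "pr M Y w * ln (pr M Y w) \<le> pr M Y w * ln (pr M X (g w))" for w
  proof (cases "pr M Y w = 0")
    case False
    then have p: "pr M Y w > 0" unfolding pr_def using measure_nonneg[of M] by (metis order_le_less)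
    have "pr M Y w \<le> pr M X (g w)" by (rule pr_mono[OF X]) (rule g)
    then show ?thesis using p by (intro mult_left_mono) auto
  qed simp
  then have "(\<Sum>w\<in>Y ` space M. pr M Y w * ln (pr M Y w)) \<le> (\<Sum>w\<in>Y ` space M. pr M Y w * ln (pr M X (g w)))"
    by (intro sum_mono)
  moreover have "Hf M X = - (\<Sum>w\<in>Y ` space M. pr M Y w * ln (pr M X (g w)))" by (rule Hf_push[OF X Y g])
  moreover have "Hf M Y = - (\<Sum>w\<in>Y ` space M. pr M Y w * ln (pr M Y w))" by (simp add: Hf_def)
  ultimately show ?thesis by linarith
qed

lemma fsimple_pair:
  assumes X: "fsimple M X" and Y: "fsimple M Y"
  shows "fsimple M (\<lambda>x. (X x, Y x))"
proof -
  have "(\<lambda>x. (X x, Y x)) ` space M \<subseteq> X ` space M \<times> Y ` space M" by auto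
  then have "finite ((\<lambda>x. (X x, Y x)) ` space M)" using X Y unfolding fsimple_def
    by (meson finite_SigmaI finite_subset)
  moreover have "lev M (\<lambda>x. (X x, Y x)) v = lev M X (fst v) \<inter> lev M Y (snd v)" for v
    unfolding lev_def by (cases v) auto
  ultimately show ?thesis using X Y unfolding fsimple_def by auto
qed

lemma Hf_pair_le:
  assumes X: "fsimple M X" and Y: "fsimple M Y"
  shows "Hf M (\<lambda>x. (X x, Y x)) \<le> Hf M X + Hf M Y"
proof -
  define Z where "Z = (\<lambda>x. (X x, Y x))"
  have Z: "fsimple M Z" unfolding Z_def by (rule fsimple_pair[OF X Y])
  define W where "W = Z ` space M"
  have fW: "finite W" using Z unfolding W_def fsimple_def by auto
  have HX: "Hf M X = - (\<Sum>w\<in>W. pr M Z w * ln (pr M X (fst w)))"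
    unfolding W_def by (rule Hf_push[OF X Z]) (simp add: Z_def)
  have HY: "Hf M Y = - (\<Sum>w\<in>W. pr M Z w * ln (pr M Y (snd w)))"
    unfolding W_def by (rule Hf_push[OF Y Z]) (simp add: Z_def)
  have pt: "pr M Z w - pr M X (fst w) * pr M Y (snd w)
      \<le> pr M Z w * (ln (pr M Z w) - ln (pr M X (fst w)) - ln (pr M Y (snd w)))" for w
    by (intro pointwise_gibbs) (auto simp: pr_def intro!: pr_mono[unfolded pr_def] X Y simp: Z_def)
  have "(\<Sum>w\<in>W. pr M Z w - pr M X (fst w) * pr M Y (snd w))
      \<le> (\<Sum>w\<in>W. pr M Z w * (ln (pr M Z w) - ln (pr M X (fst w)) - ln (pr M Y (snd w))))"
    by (intro sum_mono pt)
  also have "\<dots> = (\<Sum>w\<in>W. pr M Z w * ln (pr M Z w)) - (\<Sum>w\<in>W. pr M Z w * ln (pr M X (fst w)))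
       - (\<Sum>w\<in>W. pr M Z w * ln (pr M Y (snd w)))"
    by (simp add: right_diff_distrib sum_subtractf)
  also have "\<dots> = Hf M X + Hf M Y - Hf M Z"
    unfolding HX HY by (simp add: Hf_def W_def)
  finally have A: "(\<Sum>w\<in>W. pr M Z w) - (\<Sum>w\<in>W. pr M X (fst w) * pr M Y (snd w)) \<le> Hf M X + Hf M Y - Hf M Z"
    by (simp add: sum_subtractf)
  have "(\<Sum>w\<in>W. pr M X (fst w) * pr M Y (snd w)) \<le> (\<Sum>w\<in>X ` space M \<times> Y ` space M. pr M X (fst w) * pr M Y (snd w))"
    using X Y unfolding fsimple_def W_def Z_def
    by (intro sum_mono2) (auto simp: pr_def)
  also have "\<dots> = (\<Sum>v\<in>X ` space M. pr M X v) * (\<Sum>u\<in>Y ` space M. pr M Y u)"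
    by (simp add: sum_product sum.cartesian_product split_def)
  also have "\<dots> = 1" using sum_pr[OF X] sum_pr[OF Y] by simp
  finally have "(\<Sum>w\<in>W. pr M X (fst w) * pr M Y (snd w)) \<le> 1" .
  moreover have "(\<Sum>w\<in>W. pr M Z w) = 1" unfolding W_def by (rule sum_pr[OF Z])
  ultimately show ?thesis using A unfolding Z_def by simp
qed

lemma Hf_comp:
  assumes X: "fsimple M X" and T: "T \<in> M \<rightarrow>\<^sub>M M" "T ` space M = space M" "distr M M T = M"
  shows "fsimple M (X \<circ> T)" "Hf M (X \<circ> T) = Hf M X"
proof -
  have img: "(X \<circ> T) ` space M = X ` space M" using T(2) by (metis image_comp)
  have lv: "lev M (X \<circ> T) v = T -` lev M X v \<inter> space M" for v
    unfolding lev_def using measurable_space[OF T(1)] by auto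
  show fs: "fsimple M (X \<circ> T)" using X T(1) unfolding fsimple_def img lv
    by (auto intro: measurable_sets)
  have "pr M (X \<circ> T) v = pr M X v" for v
  proof -
    have "pr M (X \<circ> T) v = measure (distr M M T) (lev M X v)"
      unfolding pr_def lv using X T(1) unfolding fsimple_def by (subst measure_distr) auto
    then show ?thesis unfolding T(3) pr_def .
  qed
  then show "Hf M (X \<circ> T) = Hf M X" unfolding Hf_def img by simp
qed

end


definition blk :: "'a set set \<Rightarrow> 'a \<Rightarrow> 'a set" where
  "blk \<alpha> x = (THE A. A \<in> \<alpha> \<and> x \<in> A)"

definition J :: "('a \<Rightarrow> 'a) \<Rightarrow> 'a set set \<Rightarrow> nat set \<Rightarrow> 'a \<Rightarrow> nat \<Rightarrow> 'a set" where
  "J T \<alpha> S x = restrict (\<lambda>i. blk \<alpha> ((T ^^ i) x)) S"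

lemma blk_eq:
  assumes "fin_meas_partition M \<alpha>" "A \<in> \<alpha>" "x \<in> A"
  shows "blk \<alpha> x = A"
proof -
  have u: "\<And>B. B \<in> \<alpha> \<and> x \<in> B \<Longrightarrow> B = A" using assms unfolding fin_meas_partition_def disjoint_def by blast
  show ?thesis unfolding blk_def
  proof (rule the_equality)
    show "A \<in> \<alpha> \<and> x \<in> A" using assms by simp
  qed (rule u)
qed

lemma blk_in:
  assumes "fin_meas_partition M \<alpha>" "x \<in> space M"
  shows "blk \<alpha> x \<in> \<alpha>" "x \<in> blk \<alpha> x"
proof -
  obtain A where "A \<in> \<alpha>" "x \<in> A" using assms unfolding fin_meas_partition_def by blast
  moreover have "blk \<alpha> x = A" using blk_eq[OF assms(1)] \<open>A \<in> \<alpha>\<close> \<open>x \<in> A\<close> by blast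
  ultimately show "blk \<alpha> x \<in> \<alpha>" "x \<in> blk \<alpha> x" by simp_all
qed

locale dyn = prob_space M for M :: "'a measure" +
  fixes T :: "'a \<Rightarrow> 'a"
  assumes mps: "mps M T"
begin

lemma Tm: "T \<in> M \<rightarrow>\<^sub>M M" and Timg: "T ` space M = space M" and Tdistr: "distr M M T = M"
  using mps unfolding mps_def bij_betw_def by blast+

lemma Tk_meas: "(T ^^ k) \<in> M \<rightarrow>\<^sub>M M"
proof (induction k)
  case (Suc k)
  show ?case unfolding funpow.simps(2) using measurable_comp[OF Suc Tm] .
qed simp

lemma Tk_space: "x \<in> space M \<Longrightarrow> (T ^^ k) x \<in> space M"
  using measurable_space[OF Tk_meas] .

lemma Hf_comp_pow:
  assumes "fsimple M X"
  shows "fsimple M (X \<circ> (T ^^ k)) \<and> Hf M (X \<circ> (T ^^ k)) = Hf M X"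
proof (induction k)
  case 0 then show ?case using assms by simp
next
  case (Suc k)
  have e: "X \<circ> (T ^^ Suc k) = (X \<circ> (T ^^ k)) \<circ> T" by (simp only: funpow_Suc_right comp_assoc)
  have f: "fsimple M (X \<circ> (T ^^ k))" and h: "Hf M (X \<circ> (T ^^ k)) = Hf M X" using Suc unfolding comp_def by simp_all
  show ?case unfolding e using Hf_comp(1)[OF f Tm Timg Tdistr] Hf_comp(2)[OF f Tm Timg Tdistr] h by (simp only:)
qed

lemma lev_J:
  assumes P: "fin_meas_partition M \<alpha>"
  shows "lev M (J T \<alpha> S) v = (if v \<in> S \<rightarrow>\<^sub>E \<alpha> then space M \<inter> (\<Inter>i\<in>S. (T ^^ i) -` v i) else {})"
proof (cases "v \<in> S \<rightarrow>\<^sub>E \<alpha>")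
  case True
  have "x \<in> lev M (J T \<alpha> S) v \<longleftrightarrow> x \<in> space M \<inter> (\<Inter>i\<in>S. (T ^^ i) -` v i)" for x
  proof (cases "x \<in> space M")
    case True
    have "J T \<alpha> S x = v \<longleftrightarrow> (\<forall>i\<in>S. blk \<alpha> ((T ^^ i) x) = v i)"
      using \<open>v \<in> S \<rightarrow>\<^sub>E \<alpha>\<close> unfolding J_def by (auto simp: PiE_iff extensional_def restrict_def fun_eq_iff)
    also have "\<dots> \<longleftrightarrow> (\<forall>i\<in>S. (T ^^ i) x \<in> v i)"
      using \<open>v \<in> S \<rightarrow>\<^sub>E \<alpha>\<close> blk_in[OF P Tk_space[OF True]] blk_eq[OF P] by (metis PiE_mem)
    finally show ?thesis using True unfolding lev_def by auto
  qed (auto simp: lev_def)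
  then show ?thesis using True by auto
next
  case False
  have "J T \<alpha> S x \<noteq> v" if "x \<in> space M" for x
    using False blk_in[OF P Tk_space[OF that]] unfolding J_def by auto
  then show ?thesis using False unfolding lev_def by auto
qed

lemma J_img: "fin_meas_partition M \<alpha> \<Longrightarrow> J T \<alpha> S ` space M \<subseteq> S \<rightarrow>\<^sub>E \<alpha>"
  unfolding J_def using blk_in Tk_space by fastforce

lemma finite_PiE_part: "fin_meas_partition M \<alpha> \<Longrightarrow> finite S \<Longrightarrow> finite (S \<rightarrow>\<^sub>E \<alpha>)"
  unfolding fin_meas_partition_def by (intro finite_PiE) auto

lemma lev_J_sets:
  assumes P: "fin_meas_partition M \<alpha>" and S: "finite S"
  shows "lev M (J T \<alpha> S) v \<in> sets M"
proof (cases "v \<in> S \<rightarrow>\<^sub>E \<alpha> \<and> S \<noteq> {}")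
  case True
  have "space M \<inter> (\<Inter>i\<in>S. (T ^^ i) -` v i) = (\<Inter>i\<in>S. (T ^^ i) -` v i \<inter> space M)"
    using True by auto
  also have "\<dots> \<in> sets M" using True S P unfolding fin_meas_partition_def
    by (intro sets.finite_INT measurable_sets[OF Tk_meas]) auto
  finally show ?thesis using True by (simp add: lev_J[OF P])
qed (auto simp: lev_J[OF P])

lemma J_fsimple: "fin_meas_partition M \<alpha> \<Longrightarrow> finite S \<Longrightarrow> fsimple M (J T \<alpha> S)"
  unfolding fsimple_def using J_img finite_PiE_part lev_J_sets by (metis finite_subset)

lemma join_part_eq: "fin_meas_partition M \<alpha> \<Longrightarrow> join_part M T \<alpha> S = lev M (J T \<alpha> S) ` (S \<rightarrow>\<^sub>E \<alpha>)"
  unfolding join_part_def by (auto simp: lev_J)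

lemma lev_ne: "x \<in> space M \<Longrightarrow> x \<in> lev M X (X x)"
  unfolding lev_def by auto

lemma part_entropy_J:
  assumes P: "fin_meas_partition M \<alpha>" and S: "finite S"
  shows "part_entropy M (join_part M T \<alpha> S) = Hf M (J T \<alpha> S)"
proof -
  define V where "V = J T \<alpha> S ` space M"
  define \<phi> where "\<phi> A = measure M A * ln (measure M A)" for A
  have fin: "finite (lev M (J T \<alpha> S) ` (S \<rightarrow>\<^sub>E \<alpha>))" using finite_PiE_part[OF P S] by simp
  have sub: "lev M (J T \<alpha> S) ` V \<subseteq> lev M (J T \<alpha> S) ` (S \<rightarrow>\<^sub>E \<alpha>)"
    unfolding V_def by (rule image_mono[OF J_img[OF P]])
  have z: "\<phi> A = 0" if Ain: "A \<in> lev M (J T \<alpha> S) ` (S \<rightarrow>\<^sub>E \<alpha>) - lev M (J T \<alpha> S) ` V" for A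
  proof -
    obtain v where "A = lev M (J T \<alpha> S) v" "v \<notin> V" using Ain by blast
    then have "A = {}" unfolding V_def lev_def by auto
    then show ?thesis unfolding \<phi>_def by simp
  qed
  have inj: "inj_on (lev M (J T \<alpha> S)) V"
  proof (rule inj_onI)
    fix v w assume "v \<in> V" "w \<in> V" "lev M (J T \<alpha> S) v = lev M (J T \<alpha> S) w"
    then obtain x where "x \<in> space M" "v = J T \<alpha> S x" "x \<in> lev M (J T \<alpha> S) w"
      unfolding V_def using lev_ne by (metis imageE)
    then show "v = w" unfolding lev_def by auto
  qed
  have "(\<Sum>A\<in>join_part M T \<alpha> S. \<phi> A) = (\<Sum>A\<in>lev M (J T \<alpha> S) ` V. \<phi> A)"
    unfolding join_part_eq[OF P] by (rule sum.mono_neutral_right[OF fin sub]) (use z in blast)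
  also have "\<dots> = (\<Sum>v\<in>V. \<phi> (lev M (J T \<alpha> S) v))" by (rule sum.reindex[OF inj, unfolded comp_def])
  finally show ?thesis unfolding part_entropy_def Hf_def \<phi>_def V_def pr_def by simp
qed

end


lemma pw: "2 powr (- real n) = 1 / 2 ^ n"
  by (simp add: powr_minus powr_realpow divide_inverse)

lemma w_sum: "(\<Sum>S\<in>Pow {0..<n}. (2::real) powr (- real n)) = 1"
  by (simp add: pw card_Pow)

definition Hs :: "'a measure \<Rightarrow> ('a \<Rightarrow> 'a) \<Rightarrow> 'a set set \<Rightarrow> nat \<Rightarrow> real" where
  "Hs M T \<alpha> n = Hf M (J T \<alpha> {0..<n})"
definition FF :: "'a measure \<Rightarrow> ('a \<Rightarrow> 'a) \<Rightarrow> 'a set set \<Rightarrow> nat \<Rightarrow> real" where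
  "FF M T \<alpha> n = (\<Sum>S\<in>Pow {0..<n}. 2 powr (- real n) * Hf M (J T \<alpha> S))"

lemma split_range: "{0..<m+n} = {0..<m} \<union> (+) m ` {0..<(n::nat)}"
proof -
  have "x \<in> (+) m ` {0..<n}" if "m \<le> x" "x < m + n" for x
    by (rule image_eqI[of _ _ "x - m"]) (use that in auto)
  then show ?thesis by auto
qed

lemma pow_split:
  "bij_betw (\<lambda>(A, B). A \<union> (+) m ` B) (Pow {0..<m} \<times> Pow {0..<n}) (Pow {0..<m+(n::nat)})"
proof (rule bij_betwI')
  fix p q assume p: "p \<in> Pow {0..<m} \<times> Pow {0..<n}" and q: "q \<in> Pow {0..<m} \<times> Pow {0..<n}"
  obtain A B where pAB: "p = (A, B)" by (cases p)
  obtain A' B' where qAB: "q = (A', B')" by (cases q)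
  have A: "A \<subseteq> {0..<m}" "A' \<subseteq> {0..<m}" using p q pAB qAB by auto
  have memA: "a \<in> A \<longleftrightarrow> a < m \<and> a \<in> A \<union> (+) m ` B" if "A \<subseteq> {0..<m}" for a A B using that by auto
  have memB: "b \<in> B \<longleftrightarrow> m + b \<in> A \<union> (+) m ` B" if "A \<subseteq> {0..<m}" for b A B using that by auto
  show "((\<lambda>(A, B). A \<union> (+) m ` B) p = (\<lambda>(A, B). A \<union> (+) m ` B) q) = (p = q)"
  proof
    assume e: "(\<lambda>(A, B). A \<union> (+) m ` B) p = (\<lambda>(A, B). A \<union> (+) m ` B) q"
    then have e': "A \<union> (+) m ` B = A' \<union> (+) m ` B'" using pAB qAB by simp
    have "A = A'"
    proof (intro set_eqI)
      fix a show "a \<in> A \<longleftrightarrow> a \<in> A'" using memA[OF A(1), of a B] memA[OF A(2), of a B'] e' by metis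
    qed
    moreover have "B = B'"
    proof (intro set_eqI)
      fix b show "b \<in> B \<longleftrightarrow> b \<in> B'" using memB[OF A(1), of b B] memB[OF A(2), of b B'] e' by metis
    qed
    ultimately show "p = q" using pAB qAB by simp
  qed simp
next
  fix p assume "p \<in> Pow {0..<m} \<times> Pow {0..<n}"
  then show "(\<lambda>(A, B). A \<union> (+) m ` B) p \<in> Pow {0..<m + n}" by auto
next
  fix C assume C: "C \<in> Pow {0..<m + n}"
  define A where "A = C \<inter> {0..<m}"
  define B where "B = (\<lambda>x. x - m) ` (C - {0..<m})"
  have "C = A \<union> (+) m ` B"
  proof -
    have "x \<in> (+) m ` B" if "x \<in> C" "x \<ge> m" for x
      unfolding B_def by (rule image_eqI[of _ _ "x - m"]) (use that in auto)
    moreover have "x \<in> C" if "x \<in> (+) m ` B" for x using that unfolding B_def by auto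
    ultimately show ?thesis unfolding A_def by (auto simp: not_less[symmetric]) blast
  qed
  moreover have "(A, B) \<in> Pow {0..<m} \<times> Pow {0..<n}" using C unfolding A_def B_def by auto
  ultimately show "\<exists>p\<in>Pow {0..<m} \<times> Pow {0..<n}. C = (\<lambda>(A, B). A \<union> (+) m ` B) p" by auto
qed

context dyn begin

lemma Hf_const:
  assumes "\<And>x. x \<in> space M \<Longrightarrow> X x = c"
  shows "Hf M X = 0"
proof -
  have "X ` space M = {c}" using assms not_empty by auto
  moreover have "lev M X c = space M" using assms unfolding lev_def by auto
  ultimately show ?thesis unfolding Hf_def pr_def by (simp add: prob_space)
qed

context
  fixes \<alpha> assumes P: "fin_meas_partition M \<alpha>"
begin

lemma J_mono:
  assumes "finite S'" "S \<subseteq> S'"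
  shows "Hf M (J T \<alpha> S) \<le> Hf M (J T \<alpha> S')"
proof (rule Hf_mono[OF J_fsimple[OF P] J_fsimple[OF P]])
  show "finite S" using assms finite_subset by blast
  show "finite S'" by fact
  fix x assume "x \<in> space M"
  show "J T \<alpha> S x = (\<lambda>h. restrict h S) (J T \<alpha> S' x)"
    using assms(2) unfolding J_def by (auto simp: fun_eq_iff restrict_def)
qed

lemma J_union:
  assumes "finite S" "finite S'"
  shows "Hf M (J T \<alpha> (S \<union> S')) \<le> Hf M (J T \<alpha> S) + Hf M (J T \<alpha> S')"
proof -
  define g where "g = (\<lambda>(h1::nat \<Rightarrow> 'a set, h2::nat \<Rightarrow> 'a set) i. if i \<in> S then h1 i else if i \<in> S' then h2 i else undefined)"
  have "Hf M (J T \<alpha> (S \<union> S')) \<le> Hf M (\<lambda>x. (J T \<alpha> S x, J T \<alpha> S' x))"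
  proof (rule Hf_mono[OF J_fsimple[OF P] fsimple_pair[OF J_fsimple[OF P] J_fsimple[OF P]]])
    show "finite (S \<union> S')" "finite S" "finite S'" using assms by auto
    fix x assume "x \<in> space M"
    show "J T \<alpha> (S \<union> S') x = g (J T \<alpha> S x, J T \<alpha> S' x)"
      unfolding J_def g_def by (auto simp: fun_eq_iff restrict_def)
  qed
  also have "\<dots> \<le> Hf M (J T \<alpha> S) + Hf M (J T \<alpha> S')"
    by (intro Hf_pair_le J_fsimple[OF P] assms)
  finally show ?thesis .
qed

lemma J_shift:
  assumes S: "finite S"
  shows "Hf M (J T \<alpha> ((+) k ` S)) = Hf M (J T \<alpha> S)"
proof -
  define Y where "Y = J T \<alpha> S \<circ> (T ^^ k)"
  have Y: "fsimple M Y" "Hf M Y = Hf M (J T \<alpha> S)"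
    unfolding Y_def using Hf_comp_pow[OF J_fsimple[OF P S]] by auto
  have fS': "finite ((+) k ` S)" using S by simp
  have pw: "(T ^^ (k + j)) x = (T ^^ j) ((T ^^ k) x)" for j x
    by (metis add.commute funpow_add o_apply)
  have "Hf M (J T \<alpha> ((+) k ` S)) \<le> Hf M Y"
  proof (rule Hf_mono[OF J_fsimple[OF P fS'] Y(1)])
    fix x assume "x \<in> space M"
    show "J T \<alpha> ((+) k ` S) x = (\<lambda>h i. if i \<in> (+) k ` S then h (i - k) else undefined) (Y x)"
      unfolding J_def Y_def by (auto simp: fun_eq_iff restrict_def pw)
  qed
  moreover have "Hf M Y \<le> Hf M (J T \<alpha> ((+) k ` S))"
  proof (rule Hf_mono[OF Y(1) J_fsimple[OF P fS']])
    fix x assume "x \<in> space M"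
    show "Y x = (\<lambda>h j. if j \<in> S then h (k + j) else undefined) (J T \<alpha> ((+) k ` S) x)"
      unfolding J_def Y_def by (auto simp: fun_eq_iff restrict_def pw)
  qed
  ultimately show ?thesis using Y(2) by linarith
qed

lemma J_empty: "Hf M (J T \<alpha> {}) = 0"
  by (rule Hf_const[of _ "\<lambda>_. undefined"]) (simp add: J_def restrict_def)

lemma J_card:
  assumes "finite R"
  shows "Hf M (J T \<alpha> R) \<le> real (card R) * Hf M (J T \<alpha> {0})"
  using assms
proof (induction R rule: finite_induct)
  case empty then show ?case by (simp add: J_empty)
next
  case (insert r R)
  have "Hf M (J T \<alpha> (insert r R)) = Hf M (J T \<alpha> ({r} \<union> R))" by simp
  also have "\<dots> \<le> Hf M (J T \<alpha> {r}) + Hf M (J T \<alpha> R)" by (rule J_union) (use insert in auto)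
  also have "Hf M (J T \<alpha> {r}) = Hf M (J T \<alpha> {0})" using J_shift[of "{0}" r] by simp
  finally show ?case using insert by (simp add: algebra_simps)
qed

end
end


lemma sum_prod_sep: "(\<Sum>p\<in>X\<times>Y. F (fst p) * G (snd p)) = (\<Sum>x\<in>X. F x) * (\<Sum>y\<in>Y. (G y :: real))"
  by (simp add: sum_product sum.cartesian_product split_def)

lemma compl_bij: "bij_betw (\<lambda>S. {0..<n} - S) (Pow {0..<(n::nat)}) (Pow {0..<n})"
  by (rule bij_betw_byWitness[where f'="\<lambda>S. {0..<n} - S"]) auto

context dyn begin
context
  fixes \<alpha> assumes P: "fin_meas_partition M \<alpha>"
begin

lemma Hs_nonneg: "0 \<le> Hs M T \<alpha> n" by (simp add: Hs_def Hf_nonneg)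

lemma FF_nonneg: "0 \<le> FF M T \<alpha> n"
  unfolding FF_def by (intro sum_nonneg mult_nonneg_nonneg Hf_nonneg) auto

lemma Hs_sub: "Hs M T \<alpha> (m+n) \<le> Hs M T \<alpha> m + Hs M T \<alpha> n"
  unfolding Hs_def split_range using J_union[OF P, of "{0..<m}" "(+)m`{0..<n}"] J_shift[OF P, of "{0..<n}" m] by simp

lemma FF_sub: "FF M T \<alpha> (m+n) \<le> FF M T \<alpha> m + FF M T \<alpha> n"
proof -
  define c where "c k = (2::real) powr (- real k)" for k
  define h where "h S = Hf M (J T \<alpha> S)" for S
  have cmn: "c (m+n) = c m * c n" unfolding c_def by (simp add: powr_add[symmetric])
  have c0: "c k \<ge> 0" for k unfolding c_def by simp
  have "FF M T \<alpha> (m+n) = (\<Sum>C\<in>Pow {0..<m+n}. c (m+n) * h C)" unfolding FF_def c_def h_def by simp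
  also have "\<dots> = (\<Sum>p\<in>Pow {0..<m} \<times> Pow {0..<n}. c (m+n) * h ((\<lambda>(A, B). A \<union> (+) m ` B) p))"
    by (rule sum.reindex_bij_betw[OF pow_split, symmetric])
  also have "\<dots> \<le> (\<Sum>p\<in>Pow {0..<m} \<times> Pow {0..<n}. (c m * h (fst p)) * c n + c m * (c n * h (snd p)))"
  proof (rule sum_mono)
    fix p assume p: "p \<in> Pow {0..<m} \<times> Pow {0..<n}"
    obtain A B where pAB: "p = (A, B)" by (cases p)
    have fin: "finite A" "finite B" using p pAB finite_subset by auto
    have "h (A \<union> (+) m ` B) \<le> h A + h ((+) m ` B)" unfolding h_def by (rule J_union[OF P]) (use fin in auto)
    also have "h ((+) m ` B) = h B" unfolding h_def by (rule J_shift[OF P fin(2)])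
    finally have "c (m+n) * h (A \<union> (+) m ` B) \<le> c (m+n) * (h A + h B)" using c0 by (intro mult_left_mono) auto
    then show "c (m+n) * h ((\<lambda>(A, B). A \<union> (+) m ` B) p) \<le> (c m * h (fst p)) * c n + c m * (c n * h (snd p))"
      unfolding pAB cmn by (simp add: algebra_simps)
  qed
  also have "\<dots> = (\<Sum>A\<in>Pow {0..<m}. c m * h A) * (\<Sum>B\<in>Pow {0..<n}. c n) + (\<Sum>A\<in>Pow {0..<m}. c m) * (\<Sum>B\<in>Pow {0..<n}. c n * h B)"
    by (simp add: sum.distrib sum_prod_sep[where F="\<lambda>A. c m * h A" and G="\<lambda>B. c n"] sum_prod_sep[where F="\<lambda>A. c m" and G="\<lambda>B. c n * h B"])
  also have "\<dots> = FF M T \<alpha> m + FF M T \<alpha> n" using w_sum[of m] w_sum[of n] unfolding FF_def c_def h_def by simp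
  finally show ?thesis .
qed

lemma FF_le: "FF M T \<alpha> n \<le> Hs M T \<alpha> n"
proof -
  have "FF M T \<alpha> n \<le> (\<Sum>S\<in>Pow {0..<n}. 2 powr (- real n) * Hs M T \<alpha> n)"
    unfolding FF_def Hs_def by (intro sum_mono mult_left_mono J_mono[OF P]) auto
  also have "\<dots> = Hs M T \<alpha> n" using w_sum[of n] by (simp add: sum_distrib_right[symmetric])
  finally show ?thesis .
qed

lemma int_term:
  "(1 / real n) * (\<Sum>S\<in>Pow {0..<n}. 2 powr (- real n) *
      (part_entropy M (join_part M T \<alpha> S) + part_entropy M (join_part M T \<alpha> ({0..<n} - S))
       - part_entropy M (join_part M T \<alpha> {0..<n}))) = 2 * (FF M T \<alpha> n / real n) - Hs M T \<alpha> n / real n"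
proof -
  have "(\<Sum>S\<in>Pow {0..<n}. 2 powr (- real n) *
      (part_entropy M (join_part M T \<alpha> S) + part_entropy M (join_part M T \<alpha> ({0..<n} - S))
       - part_entropy M (join_part M T \<alpha> {0..<n})))
     = (\<Sum>S\<in>Pow {0..<n}. 2 powr (- real n) * Hf M (J T \<alpha> S) + 2 powr (- real n) * Hf M (J T \<alpha> ({0..<n} - S)) - 2 powr (- real n) * Hs M T \<alpha> n)"
    unfolding Hs_def
    by (intro sum.cong refl) (simp add: part_entropy_J[OF P] finite_subset algebra_simps)
  also have "\<dots> = FF M T \<alpha> n + (\<Sum>S\<in>Pow {0..<n}. 2 powr (- real n) * Hf M (J T \<alpha> ({0..<n} - S))) - Hs M T \<alpha> n"
    using w_sum[of n] unfolding FF_def by (simp add: sum.distrib sum_subtractf sum_distrib_right[symmetric])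
  also have "(\<Sum>S\<in>Pow {0..<n}. 2 powr (- real n) * Hf M (J T \<alpha> ({0..<n} - S))) = FF M T \<alpha> n"
    unfolding FF_def by (rule sum.reindex_bij_betw[OF compl_bij, of "\<lambda>S. 2 powr (- real n) * Hf M (J T \<alpha> S)"])
  finally have E: "(\<Sum>S\<in>Pow {0..<n}. 2 powr (- real n) *
      (part_entropy M (join_part M T \<alpha> S) + part_entropy M (join_part M T \<alpha> ({0..<n} - S))
       - part_entropy M (join_part M T \<alpha> {0..<n}))) = 2 * FF M T \<alpha> n - Hs M T \<alpha> n" by simp
  show ?thesis unfolding E by (simp add: diff_divide_distrib)
qed

lemma main_alpha:
  "\<exists>LH LF. (\<lambda>n. Hs M T \<alpha> n / real n) \<longlonglongrightarrow> LH \<and> (\<lambda>n. FF M T \<alpha> n / real n) \<longlonglongrightarrow> LF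
     \<and> part_dyn_entropy M T \<alpha> = LH \<and> intricacy M T (\<lambda>n S. 2 powr (- real n)) \<alpha> = 2*LF - LH \<and> LF \<le> LH"
proof -
  obtain LH where LH: "(\<lambda>n. Hs M T \<alpha> n / real n) \<longlonglongrightarrow> LH"
    using fekete[OF Hs_nonneg Hs_sub] by blast
  obtain LF where LF: "(\<lambda>n. FF M T \<alpha> n / real n) \<longlonglongrightarrow> LF"
    using fekete[OF FF_nonneg FF_sub] by blast
  have "part_dyn_entropy M T \<alpha> = lim (\<lambda>n. Hs M T \<alpha> n / real n)"
    unfolding part_dyn_entropy_def Hs_def by (simp add: part_entropy_J[OF P])
  also have "\<dots> = LH" using LH by (rule limI)
  finally have 1: "part_dyn_entropy M T \<alpha> = LH" .
  have "intricacy M T (\<lambda>n S. 2 powr (- real n)) \<alpha> = lim (\<lambda>n. 2 * (FF M T \<alpha> n / real n) - Hs M T \<alpha> n / real n)"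
    unfolding intricacy_def int_term ..
  also have "\<dots> = 2 * LF - LH" by (intro limI tendsto_intros LF LH)
  finally have 2: "intricacy M T (\<lambda>n S. 2 powr (- real n)) \<alpha> = 2*LF - LH" .
  have "LF \<le> LH" by (rule LIMSEQ_le[OF LF LH]) (auto intro!: divide_right_mono FF_le)
  then show ?thesis using 1 2 LH LF by blast
qed

end
end


definition plusK :: "nat set \<Rightarrow> nat \<Rightarrow> nat set" where
  "plusK S k = (\<Union>i\<in>S. (+) i ` {0..<k})"

lemma plusK_iff: "m \<in> plusK S k \<longleftrightarrow> (\<exists>i\<in>S. i \<le> m \<and> m - i < k)"
proof
  assume "m \<in> plusK S k" then show "\<exists>i\<in>S. i \<le> m \<and> m - i < k" unfolding plusK_def by auto
next
  assume "\<exists>i\<in>S. i \<le> m \<and> m - i < k"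
  then obtain i where "i \<in> S" "i \<le> m" "m - i < k" by blast
  then show "m \<in> plusK S k" unfolding plusK_def by (intro UN_I[of i] image_eqI[of _ _ "m - i"]) auto
qed

lemma card_filter_real: "finite A \<Longrightarrow> real (card {x\<in>A. P x}) = (\<Sum>x\<in>A. if P x then 1 else 0)"
  using sum.inter_filter[of A "\<lambda>_. 1::real" P] by simp

lemma count_bound:
  fixes n k :: nat
  shows "(\<Sum>S\<in>Pow {0..<n}. 2 powr (- real n) * real (card ({0..<n} - plusK S k))) \<le> real k + real n / 2^k"
proof -
  define W where "W m = {i. i \<le> m \<and> m - i < k}" for m
  define c :: real where "c = 2 powr (- real n)"
  have c: "c = 1 / 2^n" unfolding c_def by (rule pw)
  have cardR: "real (card ({0..<n} - plusK S k)) = (\<Sum>m\<in>{0..<n}. if m \<notin> plusK S k then 1 else 0)" for S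
  proof -
    have "{0..<n} - plusK S k = {m\<in>{0..<n}. m \<notin> plusK S k}" by auto
    then show ?thesis using card_filter_real[of "{0..<n}" "\<lambda>m. m \<notin> plusK S k"] by simp
  qed
  have cnt: "(\<Sum>S\<in>Pow {0..<n}. if m \<notin> plusK S k then 1 else (0::real)) = 2 ^ card ({0..<n} - W m)" for m
  proof -
    have "{S\<in>Pow {0..<n}. m \<notin> plusK S k} = Pow ({0..<n} - W m)"
      unfolding W_def plusK_iff by auto
    then have "real (card {S\<in>Pow {0..<n}. m \<notin> plusK S k}) = 2 ^ card ({0..<n} - W m)"
      by (simp add: card_Pow)
    then show ?thesis using card_filter_real[of "Pow {0..<n}" "\<lambda>S. m \<notin> plusK S k"] by simp
  qed
  have per: "c * 2 ^ card ({0..<n} - W m) \<le> (if m < k then 1 else 0) + 1 / 2^k" if m: "m < n" for m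
  proof (cases "m < k")
    case True
    have "card ({0..<n} - W m) \<le> n" by (metis card_Diff_subset card_atLeastLessThan diff_le_self finite_atLeastLessThan le_trans card_mono Diff_subset)
    then have "(2::real) ^ card ({0..<n} - W m) \<le> 2 ^ n" by (intro power_increasing) auto
    then have "c * 2 ^ card ({0..<n} - W m) \<le> 1" unfolding c by (simp add: field_simps)
    moreover have "0 \<le> 1 / (2::real) ^ k" by simp
    ultimately show ?thesis using True by (simp only: if_True)
  next
    case False
    have Weq: "W m = {m + 1 - k..m}" unfolding W_def using False by auto
    have "card (W m) = k" unfolding Weq using False by simp
    moreover have "W m \<subseteq> {0..<n}" unfolding Weq using m by auto
    ultimately have "card ({0..<n} - W m) = n - k" by (subst card_Diff_subset) (auto intro: finite_subset)
    moreover have "k \<le> n" using False m by simp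
    ultimately have "c * 2 ^ card ({0..<n} - W m) = 1 / 2^k" unfolding c
      by (simp add: power_diff field_simps)
    then show ?thesis using False by simp
  qed
  have "(\<Sum>S\<in>Pow {0..<n}. c * real (card ({0..<n} - plusK S k)))
      = c * (\<Sum>m\<in>{0..<n}. \<Sum>S\<in>Pow {0..<n}. if m \<notin> plusK S k then 1 else 0)"
    unfolding cardR sum_distrib_left[symmetric] by (subst sum.swap) simp
  also have "\<dots> = (\<Sum>m\<in>{0..<n}. c * 2 ^ card ({0..<n} - W m))"
    unfolding cnt sum_distrib_left ..
  also have "\<dots> \<le> (\<Sum>m\<in>{0..<n}. (if m < k then 1 else 0) + 1 / 2^k)"
    by (intro sum_mono per) auto
  also have "\<dots> = real (card {m\<in>{0..<n}. m < k}) + real n / 2^k"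
    using card_filter_real[of "{0..<n}" "\<lambda>m. m < k"] by (simp add: sum.distrib)
  also have "real (card {m\<in>{0..<n}. m < k}) \<le> real k"
  proof -
    have "{m\<in>{0..<n}. m < k} \<subseteq> {0..<k}" by auto
    then have "card {m\<in>{0..<n}. m < k} \<le> k" using card_mono[of "{0..<k}"] by fastforce
    then show ?thesis by simp
  qed
  finally show ?thesis unfolding c_def by simp
qed


lemma finite_plusK: "finite S \<Longrightarrow> finite (plusK S k)"
  unfolding plusK_def by auto

lemma funpow_swap': "(f ^^ (i + j)) x = (f ^^ j) ((f ^^ i) x)"
  by (metis add.commute funpow_add o_apply)

context dyn begin
context
  fixes \<alpha> and k :: nat assumes P: "fin_meas_partition M \<alpha>"
begin

abbreviation "\<beta> \<equiv> join_part M T \<alpha> {0..<k}"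
abbreviation "JK \<equiv> J T \<alpha> {0..<k}"

lemma beta_part: "fin_meas_partition M \<beta>"
proof -
  have eq: "\<beta> = lev M JK ` ({0..<k} \<rightarrow>\<^sub>E \<alpha>)" by (rule join_part_eq[OF P])
  have "finite \<beta>" unfolding eq using finite_PiE_part[OF P, of "{0..<k}"] by simp
  moreover have "\<beta> \<subseteq> sets M" unfolding eq using lev_J_sets[OF P] by auto
  moreover have "disjoint \<beta>"
    unfolding disjoint_def
  proof (intro ballI impI)
    fix A B assume A: "A \<in> \<beta>" and B: "B \<in> \<beta>" and AB: "A \<noteq> B"
    obtain v where v: "A = lev M JK v" using A unfolding eq by blast
    obtain w where w: "B = lev M JK w" using B unfolding eq by blast
    have "v \<noteq> w" using AB v w by blast
    then show "A \<inter> B = {}" unfolding v w by (rule lev_disj)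
  qed
  moreover have "\<Union>\<beta> = space M"
  proof
    show "\<Union>\<beta> \<subseteq> space M" unfolding eq lev_def by auto
    show "space M \<subseteq> \<Union>\<beta>"
    proof
      fix x assume x: "x \<in> space M"
      have "JK x \<in> {0..<k} \<rightarrow>\<^sub>E \<alpha>" using J_img[OF P] x by blast
      then show "x \<in> \<Union>\<beta>" unfolding eq using lev_ne[OF x] by blast
    qed
  qed
  ultimately show ?thesis unfolding fin_meas_partition_def by blast
qed

lemma blk_beta: "y \<in> space M \<Longrightarrow> blk \<beta> y = lev M JK (JK y)"
proof (rule blk_eq[OF beta_part])
  assume y: "y \<in> space M"
  have "JK y \<in> {0..<k} \<rightarrow>\<^sub>E \<alpha>" using J_img[OF P] y by blast
  then show "lev M JK (JK y) \<in> \<beta>" unfolding join_part_eq[OF P] by blast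
  show "y \<in> lev M JK (JK y)" by (rule lev_ne[OF y])
qed

lemma Hs_beta: "Hs M T \<beta> n \<le> Hs M T \<alpha> (n + k)"
  unfolding Hs_def
proof (rule Hf_mono[OF J_fsimple[OF beta_part] J_fsimple[OF P]])
  fix x assume x: "x \<in> space M"
  show "J T \<beta> {0..<n} x = (\<lambda>h i. if i < n then lev M JK (\<lambda>j. if j < k then h (i + j) else undefined) else undefined) (J T \<alpha> {0..<n+k} x)"
  proof (rule ext)
    fix i
    show "J T \<beta> {0..<n} x i = (\<lambda>h i. if i < n then lev M JK (\<lambda>j. if j < k then h (i + j) else undefined) else undefined) (J T \<alpha> {0..<n+k} x) i"
    proof (cases "i < n")
      case True
      have key: "JK ((T^^i) x) = (\<lambda>j. if j < k then J T \<alpha> {0..<n+k} x (i+j) else undefined)"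
        using True by (auto simp: J_def fun_eq_iff restrict_def funpow_swap')
      have "J T \<beta> {0..<n} x i = blk \<beta> ((T^^i) x)" using True by (simp add: J_def)
      also have "\<dots> = lev M JK (JK ((T^^i) x))" by (rule blk_beta[OF Tk_space[OF x]])
      finally show ?thesis using True key by simp
    qed (simp add: J_def)
  qed
qed auto

lemma J_beta_ge:
  assumes S: "finite S"
  shows "Hf M (J T \<alpha> (plusK S k)) \<le> Hf M (J T \<beta> S)"
proof (rule Hf_mono[OF J_fsimple[OF P finite_plusK[OF S]] J_fsimple[OF beta_part S]])
  define ch where "ch m = (SOME i. i \<in> S \<and> i \<le> m \<and> m - i < k)" for m
  define g where "g h = (\<lambda>m. if m \<in> plusK S k then JK (SOME z. z \<in> h (ch m)) (m - ch m) else undefined)" for h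
  fix x assume x: "x \<in> space M"
  show "J T \<alpha> (plusK S k) x = g (J T \<beta> S x)"
  proof (rule ext)
    fix m
    show "J T \<alpha> (plusK S k) x m = g (J T \<beta> S x) m"
    proof (cases "m \<in> plusK S k")
      case True
      then have c: "ch m \<in> S" "ch m \<le> m" "m - ch m < k"
        unfolding ch_def plusK_iff by (metis (mono_tags, lifting) someI_ex)+
      define y where "y = (T ^^ ch m) x"
      have y: "y \<in> space M" unfolding y_def by (rule Tk_space[OF x])
      have "J T \<beta> S x (ch m) = blk \<beta> y"
        unfolding y_def using c(1) by (simp add: J_def)
      then have hb: "J T \<beta> S x (ch m) = lev M JK (JK y)" using blk_beta[OF y] by simp
      define z where "z = (SOME z. z \<in> lev M JK (JK y))"
      have "z \<in> lev M JK (JK y)" unfolding z_def using lev_ne[OF y] by (rule someI)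
      then have z: "JK z = JK y" unfolding lev_def by auto
      have "g (J T \<beta> S x) m = JK y (m - ch m)" unfolding g_def hb z_def[symmetric] using True z by simp
      also have "\<dots> = blk \<alpha> ((T ^^ m) x)"
        unfolding J_def y_def using c by (simp add: funpow_swap'[symmetric])
      finally show ?thesis using True unfolding J_def by simp
    next
      case False
      then show ?thesis unfolding J_def g_def by simp
    qed
  qed
qed

lemma Hs_lower:
  assumes S: "S \<subseteq> {0..<n}"
  shows "Hs M T \<alpha> n \<le> Hf M (J T \<beta> S) + real (card ({0..<n} - plusK S k)) * Hf M (J T \<alpha> {0})"
proof -
  have fS: "finite S" using S finite_subset by blast
  define R where "R = {0..<n} - plusK S k"
  have fR: "finite R" unfolding R_def by simp
  have "Hs M T \<alpha> n \<le> Hf M (J T \<alpha> (plusK S k \<union> R))"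
    unfolding Hs_def R_def by (rule J_mono[OF P]) (use finite_plusK[OF fS] in auto)
  also have "\<dots> \<le> Hf M (J T \<alpha> (plusK S k)) + Hf M (J T \<alpha> R)"
    by (rule J_union[OF P finite_plusK[OF fS] fR])
  also have "\<dots> \<le> Hf M (J T \<beta> S) + real (card R) * Hf M (J T \<alpha> {0})"
    using J_beta_ge[OF fS] J_card[OF P fR] by linarith
  finally show ?thesis unfolding R_def .
qed


lemma FF_beta_lower:
  "Hs M T \<alpha> n - Hf M (J T \<alpha> {0}) * (real k + real n / 2^k) \<le> FF M T \<beta> n"
proof -
  define h1 where "h1 = Hf M (J T \<alpha> {0})"
  have h1: "h1 \<ge> 0" unfolding h1_def by (rule Hf_nonneg)
  define c where "c = (2::real) powr (- real n)"
  have "Hs M T \<alpha> n - h1 * (real k + real n / 2^k)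
     \<le> Hs M T \<alpha> n - h1 * (\<Sum>S\<in>Pow {0..<n}. c * real (card ({0..<n} - plusK S k)))"
    using count_bound[of n k] h1 unfolding c_def by (intro diff_left_mono mult_left_mono) auto
  also have "\<dots> = (\<Sum>S\<in>Pow {0..<n}. c * (Hs M T \<alpha> n - real (card ({0..<n} - plusK S k)) * h1))"
    using w_sum[of n] unfolding c_def
    by (simp add: sum_subtractf sum_distrib_right[symmetric] sum_distrib_left algebra_simps)
  also have "\<dots> \<le> (\<Sum>S\<in>Pow {0..<n}. c * Hf M (J T \<beta> S))"
  proof (rule sum_mono)
    fix S assume "S \<in> Pow {0..<n}"
    then have "Hs M T \<alpha> n - real (card ({0..<n} - plusK S k)) * h1 \<le> Hf M (J T \<beta> S)"
      using Hs_lower[of S n] unfolding h1_def by auto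
    then show "c * (Hs M T \<alpha> n - real (card ({0..<n} - plusK S k)) * h1) \<le> c * Hf M (J T \<beta> S)"
      unfolding c_def by (intro mult_left_mono) auto
  qed
  also have "\<dots> = FF M T \<beta> n" unfolding FF_def c_def ..
  finally show ?thesis unfolding h1_def .
qed

lemma beta_bound:
  "part_dyn_entropy M T \<alpha> - 2 * Hf M (J T \<alpha> {0}) / 2^k \<le> intricacy M T (\<lambda>n S. 2 powr (- real n)) \<beta>"
proof -
  define h1 where "h1 = Hf M (J T \<alpha> {0})"
  obtain LH LF where A: "(\<lambda>n. Hs M T \<alpha> n / real n) \<longlonglongrightarrow> LH" "(\<lambda>n. FF M T \<alpha> n / real n) \<longlonglongrightarrow> LF"
     "part_dyn_entropy M T \<alpha> = LH"
    using main_alpha[OF P] by blast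
  obtain LH' LF' where B: "(\<lambda>n. Hs M T \<beta> n / real n) \<longlonglongrightarrow> LH'" "(\<lambda>n. FF M T \<beta> n / real n) \<longlonglongrightarrow> LF'"
     "intricacy M T (\<lambda>n S. 2 powr (- real n)) \<beta> = 2*LF' - LH'"
    using main_alpha[OF beta_part] by blast
  have L1: "(\<lambda>n. Hs M T \<alpha> n / real n - h1 * real k / real n - h1 / 2^k) \<longlonglongrightarrow> LH - 0 - h1 / 2^k"
    by (intro tendsto_diff A(1) lim_const_over_n tendsto_const)
  have "LH - 0 - h1 / 2^k \<le> LF'"
  proof (rule LIMSEQ_le[OF L1 B(2)], intro exI[of _ 1] allI impI)
    fix n :: nat assume n: "1 \<le> n"
    have "Hs M T \<alpha> n - h1 * (real k + real n / 2^k) \<le> FF M T \<beta> n" using FF_beta_lower[of n] unfolding h1_def .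
    then have "(Hs M T \<alpha> n - h1 * (real k + real n / 2^k)) / real n \<le> FF M T \<beta> n / real n"
      by (intro divide_right_mono) auto
    moreover have "(Hs M T \<alpha> n - h1 * (real k + real n / 2^k)) / real n = Hs M T \<alpha> n / real n - h1 * real k / real n - h1 / 2^k"
      using n by (simp add: field_simps)
    ultimately show "Hs M T \<alpha> n / real n - h1 * real k / real n - h1 / 2^k \<le> FF M T \<beta> n / real n" by simp
  qed
  then have LF': "LH - h1 / 2^k \<le> LF'" by simp
  have L2: "(\<lambda>n. Hs M T \<alpha> (n + k) / real (n + k) * (1 + real k / real n)) \<longlonglongrightarrow> LH * (1 + 0)"
    by (intro tendsto_mult tendsto_add LIMSEQ_ignore_initial_segment[OF A(1)] tendsto_const lim_const_over_n)
  have "LH' \<le> LH * (1 + 0)"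
  proof (rule LIMSEQ_le[OF B(1) L2], intro exI[of _ 1] allI impI)
    fix n :: nat assume n: "1 \<le> n"
    have "Hs M T \<beta> n / real n \<le> Hs M T \<alpha> (n + k) / real n"
      using Hs_beta[of n] by (intro divide_right_mono) auto
    also have "\<dots> = Hs M T \<alpha> (n + k) / real (n + k) * (1 + real k / real n)"
    proof -
      have e: "1 + real k / real n = real (n + k) / real n" using n by (simp add: field_simps)
      have p: "real (n + k) \<noteq> 0" using n by simp
      show ?thesis unfolding e using p by simp
    qed
    finally show "Hs M T \<beta> n / real n \<le> Hs M T \<alpha> (n + k) / real (n + k) * (1 + real k / real n)" .
  qed
  then have "LH' \<le> LH" by simp
  then show ?thesis using LF' A(3) B(3) unfolding h1_def by simp
qed

end
end


lemma exists_k: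
  fixes h e :: real assumes "h \<ge> 0" "e > 0"
  shows "\<exists>k::nat. 2 * h / 2^k < e"
proof -
  obtain k :: nat where k: "2 * h / e < real k" using reals_Archimedean2 by blast
  have "real k < 2 ^ k" using less_exp[of k] by (metis of_nat_less_iff of_nat_numeral of_nat_power)
  moreover have "2 * h < e * real k" using k assms by (simp add: divide_less_eq mult.commute)
  ultimately have "2 * h < e * 2^k" using assms
    by (smt (verit) mult_strict_left_mono)
  then have "2 * h / 2^k < e" by (simp add: divide_less_eq)
  then show ?thesis by blast
qed

theorem corollary5p8:
  fixes M :: "'a measure" and T :: "'a \<Rightarrow> 'a"
  assumes "mps M T"
  shows "(SUP \<alpha>\<in>{\<alpha>. fin_meas_partition M \<alpha>}.
            ereal (intricacy M T (\<lambda>n S. 2 powr (- real n)) \<alpha>)) = ks_entropy M T"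
proof -
  have "dyn M T" unfolding dyn_def dyn_axioms_def using assms unfolding mps_def by blast
  then interpret dyn M T .
  have up: "intricacy M T (\<lambda>n S. 2 powr (- real n)) \<alpha> \<le> part_dyn_entropy M T \<alpha>" if "fin_meas_partition M \<alpha>" for \<alpha>
    using main_alpha[OF that] by auto
  show ?thesis
  proof (rule antisym)
    show "(SUP \<alpha>\<in>{\<alpha>. fin_meas_partition M \<alpha>}. ereal (intricacy M T (\<lambda>n S. 2 powr (- real n)) \<alpha>)) \<le> ks_entropy M T"
      unfolding ks_entropy_def by (rule SUP_mono) (use up in auto)
  next
    show "ks_entropy M T \<le> (SUP \<alpha>\<in>{\<alpha>. fin_meas_partition M \<alpha>}. ereal (intricacy M T (\<lambda>n S. 2 powr (- real n)) \<alpha>))"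
      unfolding ks_entropy_def
    proof (rule SUP_least)
      fix \<alpha> assume "\<alpha> \<in> {\<alpha>. fin_meas_partition M \<alpha>}"
      then have P: "fin_meas_partition M \<alpha>" by simp
      show "ereal (part_dyn_entropy M T \<alpha>) \<le> (SUP \<alpha>\<in>{\<alpha>. fin_meas_partition M \<alpha>}. ereal (intricacy M T (\<lambda>n S. 2 powr (- real n)) \<alpha>))"
      proof (rule ereal_le_epsilon2)
        fix e :: real assume e: "0 < e"
        obtain k :: nat where k: "2 * Hf M (J T \<alpha> {0}) / 2^k < e" using exists_k[OF Hf_nonneg e] by blast
        define \<beta> where "\<beta> = join_part M T \<alpha> {0..<k}"
        have b: "part_dyn_entropy M T \<alpha> - 2 * Hf M (J T \<alpha> {0}) / 2^k \<le> intricacy M T (\<lambda>n S. 2 powr (- real n)) \<beta>"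
          unfolding \<beta>_def by (rule beta_bound[OF P])
        have bp: "fin_meas_partition M \<beta>" unfolding \<beta>_def by (rule beta_part[OF P])
        have "ereal (part_dyn_entropy M T \<alpha>) \<le> ereal (intricacy M T (\<lambda>n S. 2 powr (- real n)) \<beta>) + ereal e"
          using b k by simp
        also have "\<dots> \<le> (SUP \<alpha>\<in>{\<alpha>. fin_meas_partition M \<alpha>}. ereal (intricacy M T (\<lambda>n S. 2 powr (- real n)) \<alpha>)) + ereal e"
          by (intro add_right_mono SUP_upper) (use bp in simp)
        finally show "ereal (part_dyn_entropy M T \<alpha>) \<le> (SUP \<alpha>\<in>{\<alpha>. fin_meas_partition M \<alpha>}. ereal (intricacy M T (\<lambda>n S. 2 powr (- real n)) \<alpha>)) + ereal e" .
      qed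
    qed
  qed
qed


end
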